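(* Let $\langle (x_n,y_n)\rangle_{n\in\mathbb{N}}$ be the solutions in $\mathbb{N}^2$ of $x^2-19\,y^2=1$, indexed so that $y_0<y_1<\cdots$. Let $\bar r,\bar s,\bar v,\bar u\in\mathbb{Z}$ satisfy \[171\,(\bar r^2+\bar r\bar s+5\bar s^2)^2-169\,(\bar v^2+\bar v\bar u+5\bar u^2)^2=2\] with $\bar r\neq\pm1$ or $\bar s\neq 0$. Then for every $\ell\geq 0$, \[ 39\,(\bar r^2+\bar r\bar s+5\bar s^2)(\bar v^2+\bar v\bar u+5\bar u^2)\nmid y_{2^{2\ell+1}}. \]
   Context: $(x_0,y_0)=(1,0)$, $(x_1,y_1)=(170,39)$, $x_n+y_n\sqrt{19}=(170+39\sqrt{19})^n$. *)

theory Defs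
  imports Main
begin

text \<open>Solutions of x^2 - 19 y^2 = 1 in N^2, indexed increasingly:
  x_n + y_n sqrt 19 = (170 + 39 sqrt 19)^n, written out as the recurrence
  obtained by multiplying by 170 + 39 sqrt 19.\<close>
fun pell19 :: "nat \<Rightarrow> int \<times> int" where
  "pell19 0 = (1, 0)"
| "pell19 (Suc n) = (170 * fst (pell19 n) + 19 * 39 * snd (pell19 n),
                     39 * fst (pell19 n) + 170 * snd (pell19 n))"

definition xP :: "nat \<Rightarrow> int" where "xP n = fst (pell19 n)"
definition yP :: "nat \<Rightarrow> int" where "yP n = snd (pell19 n)"

definition Q19 :: "int \<Rightarrow> int \<Rightarrow> int" where
  "Q19 a b = a^2 + a*b + 5*b^2"

end

theory Submission
  imports Defs
begin

lemma sq_between: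
  fixes k c x :: int
  assumes "k^2 < c" "c < (k+1)^2" "0 \<le> x" "0 \<le> k"
  shows "x^2 \<noteq> c"
proof
  assume e: "x^2 = c"
  show False
  proof (cases "x \<le> k")
    case True
    then have "x^2 \<le> k^2" using assms by (intro power_mono) auto
    then show False using e assms by simp
  next
    case False
    then have "(k+1)^2 \<le> x^2" using assms by (intro power_mono) auto
    then show False using e assms by simp
  qed
qed

lemma no_small:
  fixes x y :: int
  assumes h: "x^2 = 19*y^2 + 1" and "0 < y" "y < 39" "0 \<le> x"
  shows False
proof -
  have g1: "y \<ge> 1" using assms by simp
  have n1: "y \<noteq> 1" using sq_between[of 4 20 x] h assms(4) by auto
  have g2: "y \<ge> 2" using g1 n1 by simp
  have n2: "y \<noteq> 2" using sq_between[of 8 77 x] h assms(4) by auto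
  have g3: "y \<ge> 3" using g2 n2 by simp
  have n3: "y \<noteq> 3" using sq_between[of 13 172 x] h assms(4) by auto
  have g4: "y \<ge> 4" using g3 n3 by simp
  have n4: "y \<noteq> 4" using sq_between[of 17 305 x] h assms(4) by auto
  have g5: "y \<ge> 5" using g4 n4 by simp
  have n5: "y \<noteq> 5" using sq_between[of 21 476 x] h assms(4) by auto
  have g6: "y \<ge> 6" using g5 n5 by simp
  have n6: "y \<noteq> 6" using sq_between[of 26 685 x] h assms(4) by auto
  have g7: "y \<ge> 7" using g6 n6 by simp
  have n7: "y \<noteq> 7" using sq_between[of 30 932 x] h assms(4) by auto
  have g8: "y \<ge> 8" using g7 n7 by simp
  have n8: "y \<noteq> 8" using sq_between[of 34 1217 x] h assms(4) by auto
  have g9: "y \<ge> 9" using g8 n8 by simp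
  have n9: "y \<noteq> 9" using sq_between[of 39 1540 x] h assms(4) by auto
  have g10: "y \<ge> 10" using g9 n9 by simp
  have n10: "y \<noteq> 10" using sq_between[of 43 1901 x] h assms(4) by auto
  have g11: "y \<ge> 11" using g10 n10 by simp
  have n11: "y \<noteq> 11" using sq_between[of 47 2300 x] h assms(4) by auto
  have g12: "y \<ge> 12" using g11 n11 by simp
  have n12: "y \<noteq> 12" using sq_between[of 52 2737 x] h assms(4) by auto
  have g13: "y \<ge> 13" using g12 n12 by simp
  have n13: "y \<noteq> 13" using sq_between[of 56 3212 x] h assms(4) by auto
  have g14: "y \<ge> 14" using g13 n13 by simp
  have n14: "y \<noteq> 14" using sq_between[of 61 3725 x] h assms(4) by auto
  have g15: "y \<ge> 15" using g14 n14 by simp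
  have n15: "y \<noteq> 15" using sq_between[of 65 4276 x] h assms(4) by auto
  have g16: "y \<ge> 16" using g15 n15 by simp
  have n16: "y \<noteq> 16" using sq_between[of 69 4865 x] h assms(4) by auto
  have g17: "y \<ge> 17" using g16 n16 by simp
  have n17: "y \<noteq> 17" using sq_between[of 74 5492 x] h assms(4) by auto
  have g18: "y \<ge> 18" using g17 n17 by simp
  have n18: "y \<noteq> 18" using sq_between[of 78 6157 x] h assms(4) by auto
  have g19: "y \<ge> 19" using g18 n18 by simp
  have n19: "y \<noteq> 19" using sq_between[of 82 6860 x] h assms(4) by auto
  have g20: "y \<ge> 20" using g19 n19 by simp
  have n20: "y \<noteq> 20" using sq_between[of 87 7601 x] h assms(4) by auto
  have g21: "y \<ge> 21" using g20 n20 by simp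
  have n21: "y \<noteq> 21" using sq_between[of 91 8380 x] h assms(4) by auto
  have g22: "y \<ge> 22" using g21 n21 by simp
  have n22: "y \<noteq> 22" using sq_between[of 95 9197 x] h assms(4) by auto
  have g23: "y \<ge> 23" using g22 n22 by simp
  have n23: "y \<noteq> 23" using sq_between[of 100 10052 x] h assms(4) by auto
  have g24: "y \<ge> 24" using g23 n23 by simp
  have n24: "y \<noteq> 24" using sq_between[of 104 10945 x] h assms(4) by auto
  have g25: "y \<ge> 25" using g24 n24 by simp
  have n25: "y \<noteq> 25" using sq_between[of 108 11876 x] h assms(4) by auto
  have g26: "y \<ge> 26" using g25 n25 by simp
  have n26: "y \<noteq> 26" using sq_between[of 113 12845 x] h assms(4) by auto
  have g27: "y \<ge> 27" using g26 n26 by simp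
  have n27: "y \<noteq> 27" using sq_between[of 117 13852 x] h assms(4) by auto
  have g28: "y \<ge> 28" using g27 n27 by simp
  have n28: "y \<noteq> 28" using sq_between[of 122 14897 x] h assms(4) by auto
  have g29: "y \<ge> 29" using g28 n28 by simp
  have n29: "y \<noteq> 29" using sq_between[of 126 15980 x] h assms(4) by auto
  have g30: "y \<ge> 30" using g29 n29 by simp
  have n30: "y \<noteq> 30" using sq_between[of 130 17101 x] h assms(4) by auto
  have g31: "y \<ge> 31" using g30 n30 by simp
  have n31: "y \<noteq> 31" using sq_between[of 135 18260 x] h assms(4) by auto
  have g32: "y \<ge> 32" using g31 n31 by simp
  have n32: "y \<noteq> 32" using sq_between[of 139 19457 x] h assms(4) by auto
  have g33: "y \<ge> 33" using g32 n32 by simp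
  have n33: "y \<noteq> 33" using sq_between[of 143 20692 x] h assms(4) by auto
  have g34: "y \<ge> 34" using g33 n33 by simp
  have n34: "y \<noteq> 34" using sq_between[of 148 21965 x] h assms(4) by auto
  have g35: "y \<ge> 35" using g34 n34 by simp
  have n35: "y \<noteq> 35" using sq_between[of 152 23276 x] h assms(4) by auto
  have g36: "y \<ge> 36" using g35 n35 by simp
  have n36: "y \<noteq> 36" using sq_between[of 156 24625 x] h assms(4) by auto
  have g37: "y \<ge> 37" using g36 n36 by simp
  have n37: "y \<noteq> 37" using sq_between[of 161 26012 x] h assms(4) by auto
  have g38: "y \<ge> 38" using g37 n37 by simp
  have n38: "y \<noteq> 38" using sq_between[of 165 27437 x] h assms(4) by auto
  have g39: "y \<ge> 39" using g38 n38 by simp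
  show False using g39 assms by simp
qed

lemma pell_id: "(xP n)^2 - 19 * (yP n)^2 = 1"
  by (induction n) (auto simp: xP_def yP_def algebra_simps power2_eq_square)

lemma pell_pos: "xP n > 0 \<and> yP n \<ge> 0"
  by (induction n) (auto simp: xP_def yP_def)

lemma xP_Suc: "xP (Suc n) = 170 * xP n + 741 * yP n" by (simp add: xP_def yP_def)
lemma yP_Suc: "yP (Suc n) = 39 * xP n + 170 * yP n" by (simp add: xP_def yP_def)

lemma classify:
  fixes x y :: int
  assumes "x > 0" "y \<ge> 0" "x^2 - 19*y^2 = 1"
  shows "\<exists>n. xP n = x \<and> yP n = y"
  using assms
proof (induction "nat y" arbitrary: x y rule: less_induct)
  case less
  show ?case
  proof (cases "y = 0")
    case True
    then have "x^2 = 1" using less.prems by simp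
    then have "x = 1" using less.prems
      using power2_eq_1_iff[of x] by auto
    then show ?thesis using True by (intro exI[of _ 0]) (simp add: xP_def yP_def)
  next
    case False
    then have yp: "y > 0" using less.prems by simp
    have y39: "y \<ge> 39"
    proof (rule ccontr)
      assume "\<not> y \<ge> 39"
      then show False using no_small[of x y] less.prems yp by auto
    qed
    define x' where "x' = 170*x - 741*y"
    define y' where "y' = 170*y - 39*x"
    have "x'^2 - 19*y'^2 = x^2 - 19*y^2"
      unfolding x'_def y'_def by algebra
    then have e: "x'^2 - 19*y'^2 = 1" using less.prems(3) by simp
    have x2: "x^2 = 1 + 19*y^2" using less.prems(3) by simp
    have "(39*x)^2 \<le> (170*y)^2"
    proof -
      have "(39*x)^2 = 1521 * x^2" by (simp add: power_mult_distrib)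
      also have "\<dots> = 1521 + 28899 * y^2" using x2 by simp
      also have "\<dots> \<le> 28900 * y^2"
      proof -
        have "39^2 \<le> y^2" using y39 by (intro power_mono) auto
        then show ?thesis by simp
      qed
      also have "\<dots> = (170*y)^2" by (simp add: power_mult_distrib)
      finally show ?thesis .
    qed
    from power2_le_imp_le[OF this] have "39*x \<le> 170*y" using yp by simp
    then have y'0: "y' \<ge> 0" unfolding y'_def by simp
    have "(169*y)^2 < (39*x)^2"
    proof -
      have "(169*y)^2 = 28561 * y^2" by (simp add: power_mult_distrib)
      also have "\<dots> < 1521 + 28899 * y^2" using zero_le_power2[of y] by linarith
      also have "\<dots> = 1521 * x^2" using x2 by simp
      also have "\<dots> = (39*x)^2" by (simp add: power_mult_distrib)
      finally show ?thesis .
    qed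
    from power2_less_imp_less[OF this] have "169*y < 39*x" using less.prems by simp
    then have y'y: "y' < y" unfolding y'_def by simp
    have "(741*y)^2 < (170*x)^2"
    proof -
      have "(741*y)^2 = 549081 * y^2" by (simp add: power_mult_distrib)
      also have "\<dots> < 28900 + 549100 * y^2" using zero_le_power2[of y] by linarith
      also have "\<dots> = 28900 * x^2" using x2 by simp
      also have "\<dots> = (170*x)^2" by (simp add: power_mult_distrib)
      finally show ?thesis .
    qed
    from power2_less_imp_less[OF this] have "741*y < 170*x" using less.prems by simp
    then have x'0: "x' > 0" unfolding x'_def by simp
    have "nat y' < nat y" using y'0 y'y by simp
    then obtain n where n: "xP n = x'" "yP n = y'"
      using less.hyps[of y' x'] x'0 y'0 e by blast
    have "170*x' + 741*y' = x" "39*x' + 170*y' = y"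
      unfolding x'_def y'_def by (simp_all add: algebra_simps)
    then show ?thesis
      by (intro exI[of _ "Suc n"]) (simp add: xP_Suc yP_Suc n)
  qed
qed

lemma add_formula:
  "yP (m+n) = xP m * yP n + xP n * yP m \<and> xP (m+n) = xP m * xP n + 19 * yP m * yP n"
proof (induction m)
  case 0
  show ?case by (simp add: xP_def yP_def)
next
  case (Suc m)
  have "yP (Suc m + n) = 39 * xP (m+n) + 170 * yP (m+n)" using yP_Suc[of "m+n"] by simp
  moreover have "xP (Suc m + n) = 170 * xP (m+n) + 741 * yP (m+n)" using xP_Suc[of "m+n"] by simp
  ultimately show ?case using Suc.IH unfolding xP_Suc yP_Suc by (simp add: algebra_simps)
qed
lemma coprime_xy: "coprime (xP n) (yP n)"
proof -
  have "xP n * xP n + yP n * (- 19 * yP n) = 1" using pell_id[of n]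
    by (simp add: power2_eq_square algebra_simps)
  then show ?thesis
  proof (intro coprimeI)
    fix c assume "c dvd xP n" "c dvd yP n"
    then have "c dvd xP n * xP n + yP n * (- 19 * yP n)" by simp
    then show "is_unit c" using \<open>xP n * xP n + yP n * (- 19 * yP n) = 1\<close> by simp
  qed
qed

lemma gcd_y_add: "gcd (yP m) (yP (n + m)) = gcd (yP m) (yP n)"
proof -
  have "yP (n+m) = xP m * yP n + xP n * yP m" using add_formula[of n m] by simp
  then have "gcd (yP m) (yP (n + m)) = gcd (yP m) (xP m * yP n)"
    using gcd_add_mult[of "yP m" "xP n" "xP m * yP n"] by (simp add: ac_simps)
  also have "\<dots> = gcd (yP m) (yP n)"
    using coprime_xy[of m] by (intro gcd_mult_right_left_cancel) (simp add: coprime_commute)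
  finally show ?thesis .
qed

lemma gcd_y_diff: "m \<le> n \<Longrightarrow> gcd (yP m) (yP (n - m)) = gcd (yP m) (yP n)"
  by (simp add: gcd_y_add [symmetric, of _ "n-m"])

lemma gcd_y_mod: "0 < m \<Longrightarrow> gcd (yP m) (yP (n mod m)) = gcd (yP m) (yP n)"
proof (induct n rule: less_induct)
  case (less n)
  show "gcd (yP m) (yP (n mod m)) = gcd (yP m) (yP n)"
  proof (cases "m < n")
    case True
    then have "m \<le> n" by auto
    with \<open>0 < m\<close> have "0 < n" by auto
    with \<open>0 < m\<close> \<open>m < n\<close> have *: "n - m < n" by auto
    have "gcd (yP m) (yP (n mod m)) = gcd (yP m) (yP ((n - m) mod m))"
      by (simp add: mod_if [of n]) (use \<open>m < n\<close> in auto)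
    also have "\<dots> = gcd (yP m)  (yP (n - m))"
      by (simp add: less.hyps * \<open>0 < m\<close>)
    also have "\<dots> = gcd (yP m) (yP n)"
      by (simp add: gcd_y_diff \<open>m \<le> n\<close>)
    finally show ?thesis .
  next
    case False
    then show ?thesis using pell_pos[of n]
      by (cases "m = n") (auto simp: yP_def)
  qed
qed

lemma y_gcd: "yP (gcd m n) = gcd (yP m) (yP n)"
proof (induct m n rule: gcd_nat_induct)
  case (base m)
  then show ?case using pell_pos[of m] by (simp add: yP_def xP_def)
next
  case (step m n)
  then show ?case by (simp add: gcd_non_0_nat gcd.commute gcd_y_mod)
qed

lemma parity: "even (xP n) \<longleftrightarrow> odd n" "even (yP n) \<longleftrightarrow> even n"
proof -
  have "(even (xP n) \<longleftrightarrow> odd n) \<and> (even (yP n) \<longleftrightarrow> even n)"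
    by (induction n) (auto simp: xP_Suc yP_Suc, auto simp: xP_def yP_def)
  then show "even (xP n) \<longleftrightarrow> odd n" "even (yP n) \<longleftrightarrow> even n" by auto
qed

lemma Q19_4: "4 * Q19 a b = (2*a+b)^2 + 19*b^2"
  by (simp add: Q19_def algebra_simps power2_eq_square)

lemma Q19_nonneg: "Q19 a b \<ge> 0"
  using Q19_4[of a b] by (smt (verit) zero_le_power2)

lemma Q19_one: assumes "Q19 a b = 1" shows "(a = 1 \<or> a = -1) \<and> b = 0"
proof -
  have e: "(2*a+b)^2 + 19*b^2 = 4" using Q19_4[of a b] assms by simp
  have "b^2 \<le> 0"
  proof (rule ccontr)
    assume "\<not> b^2 \<le> 0"
    then have "b^2 > 0" by simp
    then have "b^2 \<ge> 1" by linarith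
    then show False using e by (smt (verit) zero_le_power2)
  qed
  then have b: "b = 0" by simp
  then have "(2*a)^2 = 2^2" using e by simp
  then have "2*a = 2 \<or> 2*a = -2" using power2_eq_iff by blast
  then show ?thesis using b by auto
qed

theorem mainTheorem8:
  fixes r s v u :: int and l :: nat
  assumes "171 * (Q19 r s)^2 - 169 * (Q19 v u)^2 = 2"
    and "(r \<noteq> 1 \<and> r \<noteq> -1) \<or> s \<noteq> 0"
  shows "\<not> (39 * Q19 r s * Q19 v u dvd yP (2^(2*l+1)))"
proof
  assume dv: "39 * Q19 r s * Q19 v u dvd yP (2^(2*l+1))"
  define A where "A = Q19 r s"
  define B where "B = Q19 v u"
  have A0: "A \<ge> 0" and B0: "B \<ge> 0" using Q19_nonneg A_def B_def by auto
  have eq: "171 * A^2 - 169 * B^2 = 2" using assms(1) A_def B_def by simp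
  have Bodd: "odd B"
  proof
    assume "even B"
    then obtain b where b: "B = 2*b" by auto
    then have "171 * A^2 = 2 + 4 * (169 * b^2)" using eq by (simp add: power_mult_distrib)
    then have "171 * A^2 = 2 * (1 + 2 * (169 * b^2))" by simp
    then have "even (171 * A^2)" by (metis dvd_triv_left)
    then have "even A" by simp
    then obtain a where "A = 2*a" by auto
    then have "4 * (171 * a^2) = 2 + 4 * (169 * b^2)" using eq b by (simp add: power_mult_distrib)
    then have "2 = 4 * (171 * a^2 - 169 * b^2)" by (simp add: algebra_simps)
    then have "(4::int) dvd 2" by (metis dvd_triv_left)
    then show False by simp
  qed
  define x where "x = 169 * B^2 + 1"
  have xpos: "x > 0" unfolding x_def by (simp add: add_pos_nonneg)
  have xe: "x^2 - 19 * (39*A*B)^2 = 1"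
  proof -
    have "x^2 - 1 = (x - 1) * (x + 1)" by (simp add: algebra_simps power2_eq_square)
    also have "x + 1 = 171 * A^2" using eq unfolding x_def by simp
    also have "x - 1 = 169 * B^2" unfolding x_def by simp
    finally have "x^2 - 1 = 19 * (39*A*B)^2" by (simp add: power_mult_distrib algebra_simps)
    then show ?thesis by simp
  qed
  obtain n where n: "xP n = x" "yP n = 39*A*B"
    using classify[OF xpos _ xe] A0 B0 by auto
  have "even x" unfolding x_def using Bodd by simp
  then have "odd n" using parity(1)[of n] n by simp
  then have cop: "gcd n (2^(2*l+1)) = 1" by simp
  have "yP n dvd yP (2^(2*l+1))" using dv n A_def B_def by simp
  then have "gcd (yP n) (yP (2^(2*l+1))) = yP n" using pell_pos[of n]
    by (simp add: gcd_proj1_iff)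
  then have "yP 1 = yP n" using y_gcd[of n "2^(2*l+1)"] cop by simp
  then have "39*A*B = 39" using n by (simp add: yP_def)
  then have "A*B = 1" by simp
  then have "A = 1" using A0 B0 by (simp add: zmult_eq_1_iff pos_zmult_eq_1_iff)
  then show False using Q19_one[of r s] A_def assms(2) by auto
qed

end
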